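(* Let $z$ be a positive integer and let $C$ be a quasi-cyclic LDPC code with circulant matrices of size $z$ whose base matrix is the $12\times 24$ matrix $H_{b(1/2)}$ below. Then there is no quasi-cyclic LDPC code $D$ of type IEEE802.16e with circulant matrices of size $z$ such that (i) the parity-check matrices $H_C$ and $H_D$ have the same row-weight distribution, (ii) every column of $H_D$ has Hamming weight at least $2$, and (iii) $D^{\perp}\subset C$. The rows of $H_{b(1/2)}$ are: 011000001100110000000000, 010001110001011000000000, 000111010001001100000000, 101000001100000110000000, 001000100110000011000000, 000011010001100001100000, 001100000110000000110000, 011000100100000000011000, 100011010001000000001100, 000001010011000000000110, 001100001100000000000011, 100001010001100000000001.
   Context: All codes are binary linear codes over $\mathbb{F}_2$; $D^{\perp}=\{d' : d\,d'^T=0\ \forall d\in D\}$. For a positive integer $z$, $I_z(1)$ is the $z\times z$ circulant permutation matrix of one circular right shift and $I_z(b)=I_z(1)^b$. A quasi-cyclic LDPC code with circulant matrices of size $z$ is given by a $J\times L$ model matrix with entries in $\{0,\dots,z-1\}\cup\{\infty\}$; its parity-check matrix $H$ is obtained by replacing each finite entry $p$ by $I_z(p)$ and each $\infty$ by the $z\times z$ zero matrix, and the code is $\{x\in\mathbb{F}_2^{zL}:Hx^T=0\}$. Its base matrix $H_b$ is the binary $J\times L$ matrix with $1$ exactly where the model entry is finite. The row-weight distribution of a binary matrix is, for each $w$, the number of rows of Hamming weight $w$. A quasi-cyclic LDPC code is of type IEEE802.16e if its base matrix has the form $H_b=[H_{b1}\mid h_b\mid H'_{b2}]$, where $H_{b1}$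 is $J\times(L-J)$ arbitrary, $h_b=(h_b(0),\dots,h_b(J-1))^T$ is a column of weight $3$ with $h_b(0)=h_b(J-1)=1$ and $h_b(j)=1$ for exactly one $0<j<J-1$, and $H'_{b2}$ is the $J\times(J-1)$ dual-diagonal matrix with entries $1$ at positions $(i,i)$ and $(i+1,i)$ and $0$ elsewhere; moreover, in the model matrix every $1$ of $H'_{b2}$ has shift $0$, and the top and bottom $1$'s of $h_b$ have equal shift sizes while the middle $1$ of $h_b$ has its own (unpaired) shift size. The matrix $H_{b(1/2)}$ is the base matrix of the rate-$1/2$ LDPC codes of the IEEE802.16e standard. *)

theory Defs
  imports Main
begin

(* Binary vectors over F_2 are bool lists; a code of length n is a set of bool lists of length n. *)

definition orth :: "bool list \<Rightarrow> bool list \<Rightarrow> bool" where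
  "orth x y \<longleftrightarrow> even (card {j. j < length x \<and> j < length y \<and> x ! j \<and> y ! j})"

definition dual_code :: "nat \<Rightarrow> bool list set \<Rightarrow> bool list set" where
  "dual_code n D = {y. length y = n \<and> (\<forall>d\<in>D. orth d y)}"

(* I_z(b): entry (r,c) is 1 iff c = (r + b) mod z  (I_z(1) = one circular right shift of identity) *)
definition circ :: "nat \<Rightarrow> nat \<Rightarrow> nat \<Rightarrow> nat \<Rightarrow> bool" where
  "circ z b r c \<longleftrightarrow> c = (r + b) mod z"

(* Model matrices: entries Some p (p in {0..z-1}) or None (= infinity) *)
definition model_matrix :: "nat \<Rightarrow> nat \<Rightarrow> nat \<Rightarrow> (nat \<Rightarrow> nat \<Rightarrow> nat option) \<Rightarrow> bool" where
  "model_matrix z J L M \<longleftrightarrow> (\<forall>i<J. \<forall>j<L. \<forall>p. M i j = Some p \<longrightarrow> p < z)"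

definition pcm :: "nat \<Rightarrow> (nat \<Rightarrow> nat \<Rightarrow> nat option) \<Rightarrow> nat \<Rightarrow> nat \<Rightarrow> bool" where
  "pcm z M i j = (case M (i div z) (j div z) of None \<Rightarrow> False
                   | Some p \<Rightarrow> circ z p (i mod z) (j mod z))"

definition qc_code :: "nat \<Rightarrow> nat \<Rightarrow> nat \<Rightarrow> (nat \<Rightarrow> nat \<Rightarrow> nat option) \<Rightarrow> bool list set" where
  "qc_code z J L M = {x. length x = z * L \<and>
     (\<forall>i < z * J. even (card {j. j < z * L \<and> pcm z M i j \<and> x ! j}))}"

definition base_matrix :: "(nat \<Rightarrow> nat \<Rightarrow> nat option) \<Rightarrow> nat \<Rightarrow> nat \<Rightarrow> bool" where
  "base_matrix M i j \<longleftrightarrow> M i j \<noteq> None"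

definition row_weight_dist :: "(nat \<Rightarrow> nat \<Rightarrow> bool) \<Rightarrow> nat \<Rightarrow> nat \<Rightarrow> nat \<Rightarrow> nat" where
  "row_weight_dist H R N w = card {i. i < R \<and> card {j. j < N \<and> H i j} = w}"

(* Type IEEE802.16e: H_b = [H_b1 | h_b | H'_b2] *)
definition ieee_type :: "nat \<Rightarrow> nat \<Rightarrow> (nat \<Rightarrow> nat \<Rightarrow> nat option) \<Rightarrow> bool" where
  "ieee_type J L M \<longleftrightarrow> J \<le> L \<and>
     (\<exists>j0. 0 < j0 \<and> j0 < J - 1 \<and>
        (\<forall>i<J. base_matrix M i (L - J) \<longleftrightarrow> (i = 0 \<or> i = J - 1 \<or> i = j0))) \<and>
     M 0 (L - J) = M (J - 1) (L - J) \<and>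
     (\<forall>k < J - 1. \<forall>i < J.
        (base_matrix M i (L - J + 1 + k) \<longleftrightarrow> (i = k \<or> i = k + 1)) \<and>
        ((i = k \<or> i = k + 1) \<longrightarrow> M i (L - J + 1 + k) = Some 0))"

definition Hb_half_rows :: "nat list list" where
  "Hb_half_rows = [
    [0,1,1,0,0,0,0,0,1,1,0,0,1,1,0,0,0,0,0,0,0,0,0,0],
    [0,1,0,0,0,1,1,1,0,0,0,1,0,1,1,0,0,0,0,0,0,0,0,0],
    [0,0,0,1,1,1,0,1,0,0,0,1,0,0,1,1,0,0,0,0,0,0,0,0],
    [1,0,1,0,0,0,0,0,1,1,0,0,0,0,0,1,1,0,0,0,0,0,0,0],
    [0,0,1,0,0,0,1,0,0,1,1,0,0,0,0,0,1,1,0,0,0,0,0,0],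
    [0,0,0,0,1,1,0,1,0,0,0,1,1,0,0,0,0,1,1,0,0,0,0,0],
    [0,0,1,1,0,0,0,0,0,1,1,0,0,0,0,0,0,0,1,1,0,0,0,0],
    [0,1,1,0,0,0,1,0,0,1,0,0,0,0,0,0,0,0,0,1,1,0,0,0],
    [1,0,0,0,1,1,0,1,0,0,0,1,0,0,0,0,0,0,0,0,1,1,0,0],
    [0,0,0,0,0,1,0,1,0,0,1,1,0,0,0,0,0,0,0,0,0,1,1,0],
    [0,0,1,1,0,0,0,0,1,1,0,0,0,0,0,0,0,0,0,0,0,0,1,1],
    [1,0,0,0,0,1,0,1,0,0,0,1,1,0,0,0,0,0,0,0,0,0,0,1]]"

definition Hb_half :: "nat \<Rightarrow> nat \<Rightarrow> bool" where
  "Hb_half i j \<longleftrightarrow> Hb_half_rows ! i ! j = 1"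

end

theory Submission
  imports Defs
begin


lemma sum_fibers:
  assumes "\<forall>i<R. g i \<le> (N::nat)"
  shows "(\<Sum>w\<le>N. card {i. i < R \<and> g i = w}) = R"
proof -
  have "card (\<Union>w\<in>{..N}. {i. i < R \<and> g i = w}) = (\<Sum>w\<le>N. card {i. i < R \<and> g i = w})"
    by (rule card_UN_disjoint) auto
  moreover have "(\<Union>w\<in>{..N}. {i. i < R \<and> g i = w}) = {..<R}" using assms by auto
  ultimately show ?thesis by simp
qed

lemma shift_unique:
  assumes "0 < (z::nat)"
  shows "card {t. t < z \<and> c mod z = (t + p) mod z} = 1"
proof -
  have "{t. t < z \<and> c mod z = (t + p) mod z} = {(c + (z - p mod z)) mod z}"
  proof safe
    fix t assume t: "t < z" "c mod z = (t + p) mod z"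
    show "t = (c + (z - p mod z)) mod z"
    proof -
      have "(c + (z - p mod z)) mod z = ((t + p) + (z - p mod z)) mod z"
        using t by (metis mod_add_left_eq)
      also have "(t + p) + (z - p mod z) = t + z * (p div z + 1)"
        proof -
          have "p mod z < z" using assms by simp
          moreover have "z * (p div z) + p mod z = p" by simp
          ultimately show ?thesis unfolding distrib_left mult_1_right by linarith
        qed
      also have "(t + z * (p div z + 1)) mod z = t" using t by (simp only: mod_mult_self2 mod_less)
      finally show ?thesis by simp
    qed
  next
    show "(c + (z - p mod z)) mod z < z" using assms by simp
    have "((c + (z - p mod z)) mod z + p) mod z = (c + (z - p mod z) + p) mod z"
      by (simp add: mod_add_left_eq)
    also have "c + (z - p mod z) + p = c + z * (p div z + 1)"
      proof -
          have "p mod z < z" using assms by simp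
          moreover have "z * (p div z) + p mod z = p" by simp
          ultimately show ?thesis unfolding distrib_left mult_1_right by linarith
        qed
    also have "(c + z * (p div z + 1)) mod z = c mod z" by (simp only: mod_mult_self2)
    finally show "c mod z = ((c + (z - p mod z)) mod z + p) mod z" by simp
  qed
  then show ?thesis by simp
qed

lemma card_as_sum: "card {j. j < (M::nat) \<and> P j} = (\<Sum>j<M. if P j then 1 else 0)"
proof -
  have "(\<Sum>j<M. if P j then 1 else (0::nat)) = (\<Sum>j\<in>{..<M} \<inter> {j. P j}. 1)"
    by (simp add: sum.If_cases)
  also have "{..<M} \<inter> {j. P j} = {j. j < M \<and> P j}" by auto
  finally show ?thesis by simp
qed

lemma double_count:
  "(\<Sum>t<(z::nat). card {j. j < (M::nat) \<and> P t j}) = (\<Sum>j<M. card {t. t < z \<and> P t j})"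
  unfolding card_as_sum by (rule sum.swap)

lemma block_count:
  assumes z: "0 < (z::nat)"
  shows "card {j. j < N * z \<and> (case f (j div z) of None \<Rightarrow> False | Some q \<Rightarrow> j mod z = q mod z) \<and> B (j div z)}
         = card {k. k < N \<and> f k \<noteq> None \<and> B k}" (is "card ?S = card ?T")
proof -
  have inj: "inj_on (\<lambda>j. j div z) ?S"
  proof (rule inj_onI)
    fix a b assume a: "a \<in> ?S" and b: "b \<in> ?S" and e: "a div z = b div z"
    from a obtain q where q: "f (a div z) = Some q" "a mod z = q mod z"
      by (auto split: option.splits)
    from b e q have "b mod z = q mod z" by (auto split: option.splits)
    moreover have "a = a div z * z + a mod z" "b = b div z * z + b mod z" by simp_all
    ultimately show "a = b" using q e by simp
  qed
  have img: "(\<lambda>j. j div z) ` ?S = ?T"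
  proof (rule subset_antisym)
    show "(\<lambda>j. j div z) ` ?S \<subseteq> ?T"
    proof
      fix k assume "k \<in> (\<lambda>j. j div z) ` ?S"
      then obtain j where j: "j \<in> ?S" "k = j div z" by blast
      then have "j < N * z" "f (j div z) \<noteq> None" "B (j div z)" by (auto split: option.splits)
      then show "k \<in> ?T" using j(2) less_mult_imp_div_less by blast
    qed
  next
    show "?T \<subseteq> (\<lambda>j. j div z) ` ?S"
    proof
    fix k assume "k \<in> ?T"
    then have k: "k < N" "f k \<noteq> None" "B k" by auto
    then obtain q where q: "f k = Some q" by auto
    let ?j = "k * z + q mod z"
    have d: "?j div z = k" using z by simp
    have m: "?j mod z = q mod z" using z by simp
    have "?j < N * z"
    proof -
      have "q mod z < z" using z by simp
      then have "?j < k * z + z" by simp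
      also have "k * z + z = Suc k * z" by simp
      also have "\<dots> \<le> N * z" using k(1) by (intro mult_le_mono1) simp
      finally show ?thesis .
    qed
    then have jS: "?j \<in> ?S" using d m q k by simp
    show "k \<in> (\<lambda>j. j div z) ` ?S" using image_eqI[of k "\<lambda>j. j div z" ?j ?S] d jS by simp
  qed
  qed
  show ?thesis using card_image[OF inj] img by simp
qed



lemma sum24: "(\<Sum>k<24::nat. (f::nat\<Rightarrow>nat) k) = f 0 + f 1 + f 2 + f 3 + f 4 + f 5 + f 6 + f 7 + f 8 + f 9 + f 10 + f 11 + f 12 + f 13 + f 14 + f 15 + f 16 + f 17 + f 18 + f 19 + f 20 + f 21 + f 22 + f 23"
  by (simp add: numeral_eq_Suc lessThan_Suc add.assoc)

lemma row0: "Hb_half_rows ! 0 = [0,1,1,0,0,0,0,0,1,1,0,0,1,1,0,0,0,0,0,0,0,0,0,0]"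
  by (simp add: Hb_half_rows_def)

lemma cnt0: "card {k. k < 24 \<and> v k \<and> Hb_half 0 k} = (if v 1 then 1 else 0) + (if v 2 then 1 else 0) + (if v 8 then 1 else 0) + (if v 9 then 1 else 0) + (if v 12 then 1 else 0) + (if v 13 then 1 else 0)"
  unfolding card_as_sum sum24 Hb_half_def row0 by simp

lemma row3: "Hb_half_rows ! 3 = [1,0,1,0,0,0,0,0,1,1,0,0,0,0,0,1,1,0,0,0,0,0,0,0]"
  by (simp add: Hb_half_rows_def)

lemma cnt3: "card {k. k < 24 \<and> v k \<and> Hb_half 3 k} = (if v 0 then 1 else 0) + (if v 2 then 1 else 0) + (if v 8 then 1 else 0) + (if v 9 then 1 else 0) + (if v 15 then 1 else 0) + (if v 16 then 1 else 0)"
  unfolding card_as_sum sum24 Hb_half_def row3 by simp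

lemma row4: "Hb_half_rows ! 4 = [0,0,1,0,0,0,1,0,0,1,1,0,0,0,0,0,1,1,0,0,0,0,0,0]"
  by (simp add: Hb_half_rows_def)

lemma cnt4: "card {k. k < 24 \<and> v k \<and> Hb_half 4 k} = (if v 2 then 1 else 0) + (if v 6 then 1 else 0) + (if v 9 then 1 else 0) + (if v 10 then 1 else 0) + (if v 16 then 1 else 0) + (if v 17 then 1 else 0)"
  unfolding card_as_sum sum24 Hb_half_def row4 by simp

lemma row7: "Hb_half_rows ! 7 = [0,1,1,0,0,0,1,0,0,1,0,0,0,0,0,0,0,0,0,1,1,0,0,0]"
  by (simp add: Hb_half_rows_def)

lemma cnt7: "card {k. k < 24 \<and> v k \<and> Hb_half 7 k} = (if v 1 then 1 else 0) + (if v 2 then 1 else 0) + (if v 6 then 1 else 0) + (if v 9 then 1 else 0) + (if v 19 then 1 else 0) + (if v 20 then 1 else 0)"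
  unfolding card_as_sum sum24 Hb_half_def row7 by simp

lemma row9: "Hb_half_rows ! 9 = [0,0,0,0,0,1,0,1,0,0,1,1,0,0,0,0,0,0,0,0,0,1,1,0]"
  by (simp add: Hb_half_rows_def)

lemma cnt9: "card {k. k < 24 \<and> v k \<and> Hb_half 9 k} = (if v 5 then 1 else 0) + (if v 7 then 1 else 0) + (if v 10 then 1 else 0) + (if v 11 then 1 else 0) + (if v 21 then 1 else 0) + (if v 22 then 1 else 0)"
  unfolding card_as_sum sum24 Hb_half_def row9 by simp

lemma row11: "Hb_half_rows ! 11 = [1,0,0,0,0,1,0,1,0,0,0,1,1,0,0,0,0,0,0,0,0,0,0,1]"
  by (simp add: Hb_half_rows_def)

lemma cnt11: "card {k. k < 24 \<and> v k \<and> Hb_half 11 k} = (if v 0 then 1 else 0) + (if v 5 then 1 else 0) + (if v 7 then 1 else 0) + (if v 11 then 1 else 0) + (if v 12 then 1 else 0) + (if v 23 then 1 else 0)"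
  unfolding card_as_sum sum24 Hb_half_def row11 by simp

lemma final_contra:
  fixes v :: "nat \<Rightarrow> bool"
  assumes "v 12" "v 13" "\<forall>k. 14 \<le> k \<and> k < 24 \<longrightarrow> \<not> v k"
    and ev: "\<forall>r<12. even (card {k. k < 24 \<and> v k \<and> Hb_half r k})"
  shows False
proof -
  have v: "\<not> v 14" "\<not> v 15" "\<not> v 16" "\<not> v 17" "\<not> v 18" "\<not> v 19" "\<not> v 20" "\<not> v 21" "\<not> v 22" "\<not> v 23"
    using assms(3) by simp_all
  have "even (card {k. k < 24 \<and> v k \<and> Hb_half 0 k})" "even (card {k. k < 24 \<and> v k \<and> Hb_half 3 k})"
    "even (card {k. k < 24 \<and> v k \<and> Hb_half 4 k})" "even (card {k. k < 24 \<and> v k \<and> Hb_half 7 k})"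
    "even (card {k. k < 24 \<and> v k \<and> Hb_half 9 k})" "even (card {k. k < 24 \<and> v k \<and> Hb_half 11 k})"
    using ev by simp_all
  then show False
    unfolding cnt0 cnt3 cnt4 cnt7 cnt9 cnt11 using v assms(1,2) by (simp add: even_add) argo
qed


lemma card_le_bound: "card {j. j < (N::nat) \<and> P j} \<le> N"
proof -
  have "{j. j < N \<and> P j} \<subseteq> {..<N}" by auto
  then have "card {j. j < N \<and> P j} \<le> card {..<N}" by (intro card_mono) auto
  then show ?thesis by simp
qed

lemma row_count:
  assumes z: "0 < (z::nat)" and t: "True"
  shows "card {t. t < z \<and> pcm z M (r * z + t) j \<and> X} = (if X \<and> M r (j div z) \<noteq> None then 1 else 0)"
proof (cases "X \<and> M r (j div z) \<noteq> None")
  case True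
  then obtain p where p: "M r (j div z) = Some p" and X by auto
  have "{t. t < z \<and> pcm z M (r * z + t) j \<and> X} = {t. t < z \<and> j mod z = (t + p) mod z}"
    using z p \<open>X\<close> by (auto simp: pcm_def circ_def)
  then show ?thesis unfolding \<open>{t. t < z \<and> pcm z M (r * z + t) j \<and> X} = {t. t < z \<and> j mod z = (t + p) mod z}\<close>
    using shift_unique[OF z, of j p] True by simp
next
  case False
  then have "{t. t < z \<and> pcm z M (r * z + t) j \<and> X} = {}"
    using z by (auto simp: pcm_def circ_def)
  then show ?thesis unfolding \<open>{t. t < z \<and> pcm z M (r * z + t) j \<and> X} = {}\<close> using False by simp
qed

lemma pcm_row0: "0 < z \<Longrightarrow> pcm z M 0 j = (case M 0 (j div z) of None \<Rightarrow> False | Some q \<Rightarrow> j mod z = q mod z)"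
  by (simp add: pcm_def circ_def split: option.split)

theorem mainTheorem4:
  fixes z :: nat and MC :: "nat \<Rightarrow> nat \<Rightarrow> nat option"
  assumes "0 < z"
    and "model_matrix z 12 24 MC"
    and "\<forall>i<12. \<forall>j<24. base_matrix MC i j \<longleftrightarrow> Hb_half i j"
  shows "\<not> (\<exists>J L MD. model_matrix z J L MD \<and> ieee_type J L MD \<and>
            (\<forall>w. row_weight_dist (pcm z MC) (z * 12) (z * 24) w
                 = row_weight_dist (pcm z MD) (z * J) (z * L) w) \<and>
            (\<forall>j < z * L. 2 \<le> card {i. i < z * J \<and> pcm z MD i j}) \<and>
            dual_code (z * L) (qc_code z J L MD) \<subseteq> qc_code z 12 24 MC)"
proof
  note z = assms(1)
  assume "\<exists>J L MD. model_matrix z J L MD \<and> ieee_type J L MD \<and>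
            (\<forall>w. row_weight_dist (pcm z MC) (z * 12) (z * 24) w
                 = row_weight_dist (pcm z MD) (z * J) (z * L) w) \<and>
            (\<forall>j < z * L. 2 \<le> card {i. i < z * J \<and> pcm z MD i j}) \<and>
            dual_code (z * L) (qc_code z J L MD) \<subseteq> qc_code z 12 24 MC"
  then obtain J L MD where it: "ieee_type J L MD"
    and rw: "\<forall>w. row_weight_dist (pcm z MC) (z * 12) (z * 24) w
                 = row_weight_dist (pcm z MD) (z * J) (z * L) w"
    and sub: "dual_code (z * L) (qc_code z J L MD) \<subseteq> qc_code z 12 24 MC" by blast
  have "replicate (z * L) False \<in> dual_code (z * L) (qc_code z J L MD)"
  proof -
    have E: "\<And>d. {j. j < length d \<and> j < length (replicate (z * L) False) \<and> d ! j \<and> replicate (z * L) False ! j} = {}" by auto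
    show ?thesis unfolding dual_code_def orth_def mem_Collect_eq E card.empty by simp
  qed
  then have "replicate (z * L) False \<in> qc_code z 12 24 MC" using sub by blast
  then have "z * L = z * 24" by (simp add: qc_code_def)
  then have L: "L = 24" using z by simp
  have s1: "(\<Sum>w\<le>z*24. row_weight_dist (pcm z MC) (z * 12) (z * 24) w) = z * 12"
    unfolding row_weight_dist_def by (rule sum_fibers) (simp add: card_le_bound)
  have s2: "(\<Sum>w\<le>z*24. row_weight_dist (pcm z MD) (z * J) (z * 24) w) = z * J"
    unfolding row_weight_dist_def by (rule sum_fibers) (simp add: card_le_bound)
  have "z * 12 = z * J" using s1 s2 rw L by simp
  then have J: "J = 12" using z by simp
  note sub = sub[unfolded L J]
  define x where "x = map (pcm z MD 0) [0..<z*24]"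
  have xl: "length x = z * 24" by (simp add: x_def)
  have xn: "\<And>j. j < z * 24 \<Longrightarrow> x ! j = pcm z MD 0 j" by (simp add: x_def)
  have "x \<in> dual_code (z * 24) (qc_code z 12 24 MD)"
    unfolding dual_code_def
  proof (intro CollectI conjI ballI xl)
    fix d assume d: "d \<in> qc_code z 12 24 MD"
    then have dl: "length d = z * 24" and "even (card {j. j < z * 24 \<and> pcm z MD 0 j \<and> d ! j})"
      using z by (auto simp: qc_code_def)
    moreover have "{j. j < length d \<and> j < length x \<and> d ! j \<and> x ! j} = {j. j < z * 24 \<and> pcm z MD 0 j \<and> d ! j}"
      using dl xl xn by auto
    ultimately show "orth d x" by (simp add: orth_def)
  qed
  then have "x \<in> qc_code z 12 24 MC" using sub by blast
  then have xC: "\<forall>i<z*12. even (card {j. j < z * 24 \<and> pcm z MC i j \<and> x ! j})"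
    by (simp add: qc_code_def)
  have evr: "even (card {k. k < 24 \<and> MD 0 k \<noteq> None \<and> Hb_half r k})" if r: "r < 12" for r
  proof -
    have "even (\<Sum>t<z. card {j. j < z * 24 \<and> pcm z MC (r * z + t) j \<and> pcm z MD 0 j})"
    proof (rule dvd_sum)
      fix t assume "t \<in> {..<z}"
      then have t: "t < z" by simp
      have "r * z + t < r * z + z" using t by simp
      also have "r * z + z = Suc r * z" by simp
      also have "\<dots> \<le> 12 * z" using r by (intro mult_le_mono1) simp
      finally have "r * z + t < z * 12" by simp
      then have "even (card {j. j < z * 24 \<and> pcm z MC (r * z + t) j \<and> x ! j})" using xC by simp
      moreover have "{j. j < z * 24 \<and> pcm z MC (r * z + t) j \<and> x ! j} = {j. j < z * 24 \<and> pcm z MC (r * z + t) j \<and> pcm z MD 0 j}"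
        using xn by auto
      ultimately show "even (card {j. j < z * 24 \<and> pcm z MC (r * z + t) j \<and> pcm z MD 0 j})" by simp
    qed
    also have "(\<Sum>t<z. card {j. j < z * 24 \<and> pcm z MC (r * z + t) j \<and> pcm z MD 0 j})
       = (\<Sum>j<z*24. card {t. t < z \<and> pcm z MC (r * z + t) j \<and> pcm z MD 0 j})"
      by (rule double_count)
    also have "\<dots> = (\<Sum>j<z*24. if pcm z MD 0 j \<and> MC r (j div z) \<noteq> None then 1 else 0)"
      using row_count[OF z] by simp
    also have "\<dots> = card {j. j < z * 24 \<and> pcm z MD 0 j \<and> MC r (j div z) \<noteq> None}"
      by (simp add: card_as_sum)
    also have "\<dots> = card {j. j < 24 * z \<and> (case MD 0 (j div z) of None \<Rightarrow> False | Some q \<Rightarrow> j mod z = q mod z) \<and> MC r (j div z) \<noteq> None}"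
      using pcm_row0[OF z] by (simp add: mult.commute)
    also have "\<dots> = card {k. k < 24 \<and> MD 0 k \<noteq> None \<and> MC r k \<noteq> None}"
      by (rule block_count[OF z])
    also have "{k. k < 24 \<and> MD 0 k \<noteq> None \<and> MC r k \<noteq> None} = {k. k < 24 \<and> MD 0 k \<noteq> None \<and> Hb_half r k}"
      using assms(3) r by (auto simp: base_matrix_def)
    finally show ?thesis .
  qed
  from it have ieee: "(\<exists>j0. 0 < j0 \<and> j0 < 11 \<and> (\<forall>i<12. base_matrix MD i 12 \<longleftrightarrow> (i = 0 \<or> i = 11 \<or> i = j0)))"
    "\<forall>k < 11. \<forall>i < 12. (base_matrix MD i (13 + k) \<longleftrightarrow> (i = k \<or> i = k + 1))"
    unfolding ieee_type_def L J by auto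
  have v12: "MD 0 12 \<noteq> None" using ieee(1) by (auto simp: base_matrix_def)
  have v13: "MD 0 13 \<noteq> None" using ieee(2)[rule_format, of 0 0] by (simp add: base_matrix_def)
  have vhi: "\<forall>k. 14 \<le> k \<and> k < 24 \<longrightarrow> \<not> MD 0 k \<noteq> None"
  proof (intro allI impI)
    fix k :: nat assume k: "14 \<le> k \<and> k < 24"
    define m where "m = k - 13"
    have m: "m < 11" "m \<noteq> 0" "k = 13 + m" using k by (auto simp: m_def)
    have "\<not> base_matrix MD 0 (13 + m)" using ieee(2)[rule_format, of m 0] m(1,2) by simp
    then show "\<not> MD 0 k \<noteq> None" unfolding m(3) base_matrix_def by simp
  qed
  show False
    by (rule final_contra[of "\<lambda>k. MD 0 k \<noteq> None", OF v12 v13 vhi]) (use evr in blast)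
qed

end
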